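(* For every finite hyperplane arrangement $A$ in $\mathbb{R}^d$ and every $q\in\mathbb{R}^d$, $\mathrm{HTvD}(A,q)\ge \frac{1}{d}\mathrm{RD}(A,q)$.
   Context: Regression depth $\mathrm{RD}(A,q)$: the minimum, over all closed rays emanating from $q$, of the number of hyperplanes of $A$ intersected by or parallel to the ray (a hyperplane containing $q$ counts for every ray). Hyperplane Tverberg depth $\mathrm{HTvD}(A,q)$: the maximum $r$ such that $A$ can be partitioned into $r$ parts with $\mathrm{RD}(\text{part},q)\ge 1$ for each part. *)

theory Defs
  imports "HOL-Analysis.Analysis" "HOL-Library.Disjoint_Sets"
begin

definition hyperplane :: "'a::euclidean_space set \<Rightarrow> bool" where
  "hyperplane H \<longleftrightarrow> (\<exists>a b. a \<noteq> 0 \<and> H = {x. inner a x = b})"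

text \<open>The closed ray from q in direction v (v nonzero) meets H: it intersects H, or
  it is parallel to H (v lies in the direction space of H).\<close>
definition ray_meets :: "'a::euclidean_space \<Rightarrow> 'a \<Rightarrow> 'a set \<Rightarrow> bool" where
  "ray_meets q v H \<longleftrightarrow> (\<exists>t::real. t \<ge> 0 \<and> q + t *\<^sub>R v \<in> H) \<or> (\<forall>x\<in>H. x + v \<in> H)"

definition RD :: "'a::euclidean_space set set \<Rightarrow> 'a \<Rightarrow> nat" where
  "RD A q = (INF v\<in>{v. v \<noteq> 0}. card {H\<in>A. ray_meets q v H})"

definition HTvD :: "'a::euclidean_space set set \<Rightarrow> 'a \<Rightarrow> nat" where
  "HTvD A q = Sup {r. \<exists>P. partition_on A P \<and> card P = r \<and> (\<forall>B\<in>P. RD B q \<ge> 1)}"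

end

theory Submission
  imports Defs
begin

lemma zero_in_hull:
  fixes w :: "'b \<Rightarrow> 'a::euclidean_space"
  assumes "finite A" "\<forall>v. v\<noteq>0 \<longrightarrow> (\<exists>H\<in>A. inner (w H) v \<le> 0)"
  shows "0 \<in> convex hull (w ` A)"
proof (rule ccontr)
  assume "0 \<notin> convex hull (w ` A)"
  moreover have "closed (convex hull (w ` A))"
    using assms(1) by (simp add: compact_imp_closed finite_imp_compact_convex_hull)
  ultimately obtain a b where ab: "a \<noteq> 0" "0 < b" "\<forall>x\<in>convex hull (w ` A). inner a x > b"
    using separating_hyperplane_closed_0[of "convex hull (w ` A)"] by auto
  then obtain H where "H \<in> A" "inner (w H) a \<le> 0" using assms(2) by blast
  moreover have "w H \<in> convex hull (w ` A)" using \<open>H \<in> A\<close> by (simp add: hull_inc)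
  ultimately show False using ab by (smt (verit) inner_commute)
qed

lemma hull_good:
  fixes S :: "'a::euclidean_space set"
  assumes "0 \<in> convex hull S"
  shows "\<exists>s\<in>S. inner s v \<le> 0"
proof (rule ccontr)
  assume "\<not> ?thesis"
  then have "S \<subseteq> {x. inner v x > 0}" by (auto simp: inner_commute)
  then have "convex hull S \<subseteq> {x. inner v x > 0}"
    by (rule hull_minimal) (rule convex_halfspace_gt)
  with assms show False by auto
qed

lemma min_hull:
  fixes S :: "'a::euclidean_space set"
  assumes fin: "finite S" and z: "0 \<in> convex hull S"
    and minS: "\<And>S'. S' \<subseteq> S \<Longrightarrow> 0 \<in> convex hull S' \<Longrightarrow> card S \<le> card S'"
    and v: "v \<noteq> 0"
  shows "card {s\<in>S. inner s v \<le> 0} \<le> DIM('a)"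
proof -
  obtain S' where S': "finite S'" "S' \<subseteq> S" "card S' \<le> aff_dim S + 1" "0 \<in> convex hull S'"
    using z unfolding caratheodory_aff_dim[of S] by auto
  have c1: "int (card S) \<le> aff_dim S + 1" using minS[OF S'(2) S'(4)] S'(3) by linarith
  have c2: "aff_dim S \<le> int DIM('a)" by (rule aff_dim_le_DIM)
  obtain u where u: "\<forall>x\<in>S. 0 \<le> u x" "sum u S = 1" "(\<Sum>x\<in>S. u x *\<^sub>R x) = 0"
    using z unfolding convex_hull_finite[OF fin] by auto
  have upos: "u s > 0" if "s \<in> S" for s
  proof (rule ccontr)
    assume "\<not> u s > 0"
    then have us: "u s = 0" using u(1) that by force
    have "0 \<in> convex hull (S - {s})"
      unfolding convex_hull_finite[OF finite_Diff[OF fin]]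
      using u us that fin by (auto simp: sum_diff1 intro!: exI[of _ u])
    from minS[OF _ this] have "card S \<le> card (S - {s})" by blast
    moreover have "card (S - {s}) < card S" by (rule card_Diff1_less[OF fin that])
    ultimately show False by simp
  qed
  show ?thesis
  proof (cases "card S \<le> DIM('a)")
    case True
    have "card {s\<in>S. inner s v \<le> 0} \<le> card S" by (rule card_mono[OF fin]) auto
    then show ?thesis using True by linarith
  next
    case False
    then have cS: "card S = DIM('a) + 1" using c1 c2 by linarith
    have "\<exists>s\<in>S. inner s v > 0"
    proof (rule ccontr)
      assume "\<not> ?thesis"
      then have le: "\<forall>s\<in>S. u s * inner s v \<le> 0"
        using u(1) by (meson mult_nonneg_nonpos not_less)
      have "(\<Sum>s\<in>S. u s * inner s v) = inner (\<Sum>x\<in>S. u x *\<^sub>R x) v"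
        by (simp add: inner_sum_left)
      then have "(\<Sum>s\<in>S. u s * inner s v) = 0" using u(3) by simp
      then have "(\<Sum>s\<in>S. - (u s * inner s v)) = 0" by (simp add: sum_negf)
      then have "\<forall>s\<in>S. - (u s * inner s v) = 0"
        using sum_nonneg_eq_0_iff[OF fin, of "\<lambda>s. - (u s * inner s v)"] le by auto
      then have zz: "\<forall>s\<in>S. inner s v = 0" using upos by fastforce
      have "aff_dim S = int DIM('a)" using cS c1 c2 by linarith
      then have "affine hull S = UNIV" by (simp add: aff_dim_eq_full)
      moreover have "affine hull S \<subseteq> {x. inner v x = 0}"
      proof -
        have aff: "affine {x. inner v x = 0}" by (rule affine_hyperplane)
        have sub: "S \<subseteq> {x. inner v x = 0}" using zz by (auto simp: inner_commute)
        show ?thesis using hull_minimal[of S "{x. inner v x = 0}" affine] sub aff by blast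
      qed
      ultimately have "inner v v = 0" by blast
      with v show False by simp
    qed
    then obtain s where s: "s \<in> S" "inner s v > 0" by blast
    have "{s\<in>S. inner s v \<le> 0} \<subset> S" using s by force
    then have "card {s\<in>S. inner s v \<le> 0} < card S" using fin by (simp add: psubset_card_mono)
    then show ?thesis using cS by simp
  qed
qed

lemma core:
  fixes w :: "'b \<Rightarrow> 'a::euclidean_space"
  assumes fin: "finite A" and good: "\<forall>v. v\<noteq>0 \<longrightarrow> (\<exists>H\<in>A. inner (w H) v \<le> 0)"
  shows "\<exists>B. B \<subseteq> A \<and> B \<noteq> {} \<and> (\<forall>v. v\<noteq>0 \<longrightarrow> (\<exists>H\<in>B. inner (w H) v \<le> 0))
           \<and> (\<forall>v. v\<noteq>0 \<longrightarrow> card {H\<in>B. inner (w H) v \<le> 0} \<le> DIM('a))"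
proof -
  define T where "T = w ` A"
  have finT: "finite T" using fin by (simp add: T_def)
  have zT: "0 \<in> convex hull T" unfolding T_def by (rule zero_in_hull[OF fin good])
  define P where "P n \<longleftrightarrow> (\<exists>S\<subseteq>T. 0 \<in> convex hull S \<and> card S = n)" for n
  have "P (card T)" unfolding P_def using zT by blast
  then have PL: "P (LEAST n. P n)" by (rule LeastI)
  then obtain S where S: "S \<subseteq> T" "0 \<in> convex hull S" "card S = (LEAST n. P n)"
    unfolding P_def by blast
  have finS: "finite S" using S(1) finT finite_subset by blast
  have minS: "card S \<le> card S'" if "S' \<subseteq> S" "0 \<in> convex hull S'" for S'
  proof -
    have "P (card S')" unfolding P_def using that S(1) by blast
    then show ?thesis using S(3) by (simp add: Least_le)
  qed
  define g where "g s = (SOME H. H \<in> A \<and> w H = s)" for s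
  have g: "g s \<in> A \<and> w (g s) = s" if "s \<in> S" for s
  proof -
    have "\<exists>H. H \<in> A \<and> w H = s" using that S(1) unfolding T_def by blast
    then show ?thesis unfolding g_def by (rule someI_ex)
  qed
  have injg: "inj_on g S" by (metis g inj_onI)
  define B where "B = g ` S"
  have BA: "B \<subseteq> A" using g B_def by blast
  have goodB: "\<exists>H\<in>B. inner (w H) v \<le> 0" for v
  proof -
    obtain s where "s \<in> S" "inner s v \<le> 0" using hull_good[OF S(2)] by blast
    then show ?thesis using g B_def by force
  qed
  have cnt: "card {H\<in>B. inner (w H) v \<le> 0} \<le> DIM('a)" if "v \<noteq> 0" for v
  proof -
    have "{H\<in>B. inner (w H) v \<le> 0} = g ` {s\<in>S. inner s v \<le> 0}"
      unfolding B_def using g by force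
    then have "card {H\<in>B. inner (w H) v \<le> 0} \<le> card {s\<in>S. inner s v \<le> 0}"
      by (simp add: card_image_le finS)
    also have "\<dots> \<le> DIM('a)" by (rule min_hull[OF finS S(2) minS that])
    finally show ?thesis .
  qed
  have "B \<noteq> {}" using goodB[of 0] by auto
  then show ?thesis using BA goodB cnt by blast
qed

lemma main:
  fixes w :: "'b \<Rightarrow> 'a::euclidean_space"
  assumes "finite A" and "\<forall>v. v\<noteq>0 \<longrightarrow> (\<exists>H\<in>A. inner (w H) v \<le> 0)"
  shows "\<exists>P v. partition_on A P \<and> (\<forall>B\<in>P. \<forall>v. v\<noteq>0 \<longrightarrow> (\<exists>H\<in>B. inner (w H) v \<le> 0))
            \<and> v \<noteq> 0 \<and> card {H\<in>A. inner (w H) v \<le> 0} \<le> DIM('a) * card P"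
  using assms
proof (induction "card A" arbitrary: A rule: less_induct)
  case less
  obtain B where B: "B \<subseteq> A" "B \<noteq> {}" "\<forall>v. v\<noteq>0 \<longrightarrow> (\<exists>H\<in>B. inner (w H) v \<le> 0)"
    "\<forall>v. v\<noteq>0 \<longrightarrow> card {H\<in>B. inner (w H) v \<le> 0} \<le> DIM('a)"
    using core[OF less.prems] by blast
  have finB: "finite B" using B(1) less.prems(1) finite_subset by blast
  have split: "card {H\<in>A. inner (w H) v \<le> 0} = card {H\<in>A - B. inner (w H) v \<le> 0} + card {H\<in>B. inner (w H) v \<le> 0}" for v
  proof -
    have "{H\<in>A. inner (w H) v \<le> 0} = {H\<in>A - B. inner (w H) v \<le> 0} \<union> {H\<in>B. inner (w H) v \<le> 0}"
      using B(1) by blast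
    then show ?thesis using less.prems(1) finB
      by (simp add: card_Un_disjoint disjoint_iff)
  qed
  show ?case
  proof (cases "\<forall>v. v\<noteq>0 \<longrightarrow> (\<exists>H\<in>A - B. inner (w H) v \<le> 0)")
    case True
    have lt: "card (A - B) < card A"
    proof -
      have "card B > 0" using finB B(2) by (simp add: card_gt_0_iff)
      then show ?thesis using card_Diff_subset[OF finB B(1)] card_mono[OF less.prems(1) B(1)] by linarith
    qed
    obtain P v where P: "partition_on (A - B) P"
      "\<forall>B\<in>P. \<forall>v. v\<noteq>0 \<longrightarrow> (\<exists>H\<in>B. inner (w H) v \<le> 0)" "v \<noteq> 0"
      "card {H\<in>A - B. inner (w H) v \<le> 0} \<le> DIM('a) * card P"
      using less.hyps[OF lt _ True] less.prems(1) by blast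
    have disj: "disjnt B (\<Union>P)" using partition_onD1[OF P(1)] by (auto simp: disjnt_def)
    have pA: "partition_on A (insert B P)"
      using partition_on_insert[OF disj] P(1) B(1,2) by blast
    have finP: "finite P" using partition_onD1[OF P(1)] less.prems(1)
      by (metis finite_Diff finite_UnionD)
    have "B \<notin> P" using disj B(2) by (auto simp: disjnt_def)
    then have cP: "card (insert B P) = card P + 1" using finP by simp
    have "card {H\<in>A. inner (w H) v \<le> 0} \<le> DIM('a) * card P + DIM('a)"
      using split[of v] P(4) B(4) P(3) by fastforce
    then have "card {H\<in>A. inner (w H) v \<le> 0} \<le> DIM('a) * card (insert B P)"
      using cP by simp
    then show ?thesis using pA P(2) B(3) P(3) by (intro exI[of _ "insert B P"] exI[of _ v]) auto
  next
    case False
    then obtain v where v: "v \<noteq> 0" "\<forall>H\<in>A - B. \<not> inner (w H) v \<le> 0" by blast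
    then have "{H\<in>A - B. inner (w H) v \<le> 0} = {}" by blast
    then have "card {H\<in>A - B. inner (w H) v \<le> 0} = 0" by (simp only: card.empty)
    then have "card {H\<in>A. inner (w H) v \<le> 0} = card {H\<in>B. inner (w H) v \<le> 0}"
      using split[of v] by linarith
    then have "card {H\<in>A. inner (w H) v \<le> 0} \<le> DIM('a) * card {A}"
      using B(4) v(1) by simp
    moreover have "partition_on A {A}" using B(1,2) by (intro partition_on_space) blast
    ultimately show ?thesis using less.prems(2) v(1) by (intro exI[of _ "{A}"] exI[of _ v]) auto
  qed
qed

lemma meets_iff:
  fixes a q v :: "'a::euclidean_space"
  assumes a: "a \<noteq> 0"
  shows "ray_meets q v {x. inner a x = b} \<longleftrightarrow> inner ((inner a q - b) *\<^sub>R a) v \<le> 0"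
proof -
  have par: "(\<forall>x\<in>{x. inner a x = b}. x + v \<in> {x. inner a x = b}) \<longleftrightarrow> inner a v = 0"
  proof
    assume h: "\<forall>x\<in>{x. inner a x = b}. x + v \<in> {x. inner a x = b}"
    define x0 where "x0 = (b / inner a a) *\<^sub>R a"
    have "inner a a \<noteq> 0" using a by simp
    then have x0: "inner a x0 = b" unfolding x0_def by simp
    then have "inner a (x0 + v) = b" using h by blast
    then show "inner a v = 0" using x0 by (simp add: inner_add_right)
  qed (simp add: inner_add_right)
  have e: "inner ((inner a q - b) *\<^sub>R a) v = (inner a q - b) * inner a v" by simp
  show ?thesis
  proof (cases "inner a v = 0")
    case True
    then show ?thesis unfolding ray_meets_def par e by simp
  next
    case False
    have "(\<exists>t::real. t \<ge> 0 \<and> q + t *\<^sub>R v \<in> {x. inner a x = b}) \<longleftrightarrow> (inner a q - b) * inner a v \<le> 0"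
    proof
      assume "\<exists>t::real. t \<ge> 0 \<and> q + t *\<^sub>R v \<in> {x. inner a x = b}"
      then obtain t where t: "t \<ge> 0" "inner a q + t * inner a v = b" by (auto simp: inner_add_right)
      then have "inner a q - b = - t * inner a v" by linarith
      then have "(inner a q - b) * inner a v = - t * (inner a v * inner a v)" by simp
      then show "(inner a q - b) * inner a v \<le> 0" using t(1) by (simp add: mult_nonneg_nonneg)
    next
      assume h: "(inner a q - b) * inner a v \<le> 0"
      define t where "t = (b - inner a q) / inner a v"
      have "0 \<le> (b - inner a q) * inner a v" using h by (simp add: algebra_simps)
      then have "t \<ge> 0" unfolding t_def by (simp add: zero_le_mult_iff zero_le_divide_iff)
      moreover have "inner a q + t * inner a v = b" unfolding t_def using False by simp
      ultimately show "\<exists>t::real. t \<ge> 0 \<and> q + t *\<^sub>R v \<in> {x. inner a x = b}"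
        by (intro exI[of _ t]) (simp add: inner_add_right)
    qed
    then show ?thesis unfolding ray_meets_def par e using False by simp
  qed
qed

definition wv :: "'a::euclidean_space \<Rightarrow> 'a set \<Rightarrow> 'a" where
  "wv q H = (SOME c. \<forall>v. ray_meets q v H \<longleftrightarrow> inner c v \<le> 0)"

lemma wv_meets:
  assumes "hyperplane H"
  shows "ray_meets q v H \<longleftrightarrow> inner (wv q H) v \<le> 0"
proof -
  obtain a b where ab: "a \<noteq> 0" "H = {x. inner a x = b}" using assms unfolding hyperplane_def by blast
  have "\<exists>c. \<forall>v. ray_meets q v H \<longleftrightarrow> inner c v \<le> 0"
    using meets_iff[OF ab(1)] ab(2) by blast
  then have "\<forall>v. ray_meets q v H \<longleftrightarrow> inner (wv q H) v \<le> 0"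
    unfolding wv_def by (rule someI_ex)
  then show ?thesis by blast
qed

lemma RD_eq:
  assumes "\<forall>H\<in>A. hyperplane H"
  shows "RD A q = (INF v\<in>{v. v \<noteq> 0}. card {H\<in>A. inner (wv q H) v \<le> 0})"
proof -
  have "{H\<in>A. ray_meets q v H} = {H\<in>A. inner (wv q H) v \<le> 0}" for v
    using assms wv_meets by blast
  then show ?thesis unfolding RD_def by simp
qed

lemma nonzero_ex: "{v::'a::euclidean_space. v \<noteq> 0} \<noteq> {}"
proof -
  have "(SOME i. i \<in> Basis) \<noteq> (0::'a)" by (metis Basis_zero SOME_Basis)
  then show ?thesis by blast
qed

theorem lemma3p4:
  fixes A :: "'a::euclidean_space set set" and q :: 'a
  assumes "finite A" and "\<forall>H\<in>A. hyperplane H"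
  shows "real (HTvD A q) \<ge> real (RD A q) / real DIM('a)"
proof (cases "\<forall>v. v\<noteq>0 \<longrightarrow> (\<exists>H\<in>A. inner (wv q H) v \<le> 0)")
  case True
  obtain P v where P: "partition_on A P" "\<forall>B\<in>P. \<forall>v. v\<noteq>0 \<longrightarrow> (\<exists>H\<in>B. inner (wv q H) v \<le> 0)"
    "v \<noteq> 0" "card {H\<in>A. inner (wv q H) v \<le> 0} \<le> DIM('a) * card P"
    using main[OF assms(1) True] by blast
  have RDle: "RD A q \<le> DIM('a) * card P"
  proof -
    have "RD A q \<le> card {H\<in>A. inner (wv q H) v \<le> 0}"
      unfolding RD_eq[OF assms(2)] by (rule cINF_lower) (use P(3) in auto)
    then show ?thesis using P(4) by linarith
  qed
  have parts: "RD B q \<ge> 1" if "B \<in> P" for B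
  proof -
    have BA: "B \<subseteq> A" using partition_onD1[OF P(1)] that by blast
    then have finB: "finite B" using assms(1) finite_subset by blast
    have hB: "\<forall>H\<in>B. hyperplane H" using BA assms(2) by blast
    show ?thesis unfolding RD_eq[OF hB]
    proof (rule cINF_greatest[OF nonzero_ex])
      fix u :: 'a assume "u \<in> {v. v \<noteq> 0}"
      then have u0: "u \<noteq> 0" by simp
      have "\<exists>H\<in>B. inner (wv q H) u \<le> 0" using P(2) \<open>B \<in> P\<close> u0 by blast
      then have ne: "{H\<in>B. inner (wv q H) u \<le> 0} \<noteq> {}" by blast
      have fs: "finite {H\<in>B. inner (wv q H) u \<le> 0}" using finB by simp
      have "card {H\<in>B. inner (wv q H) u \<le> 0} \<noteq> 0" using ne fs by simp
      then show "1 \<le> card {H\<in>B. inner (wv q H) u \<le> 0}" by linarith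
    qed
  qed
  have bdd: "bdd_above {r. \<exists>P. partition_on A P \<and> card P = r \<and> (\<forall>B\<in>P. RD B q \<ge> 1)}"
  proof (rule bdd_aboveI)
    fix r assume "r \<in> {r. \<exists>P. partition_on A P \<and> card P = r \<and> (\<forall>B\<in>P. RD B q \<ge> 1)}"
    then obtain P' where "partition_on A P'" "card P' = r" by blast
    from \<open>partition_on A P'\<close> have "\<Union>P' = A" by (simp add: partition_on_def)
    then have "P' \<subseteq> Pow A" by blast
    then have "card P' \<le> card (Pow A)" using assms(1) by (simp add: card_mono)
    then show "r \<le> 2 ^ card A" using \<open>card P' = r\<close> assms(1) by (simp add: card_Pow)
  qed
  have "card P \<le> HTvD A q"
  proof -
    have "card P \<in> {r. \<exists>P. partition_on A P \<and> card P = r \<and> (\<forall>B\<in>P. RD B q \<ge> 1)}"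
      using P(1) parts by blast
    then show ?thesis unfolding HTvD_def by (rule cSup_upper[OF _ bdd])
  qed
  then have "DIM('a) * card P \<le> DIM('a) * HTvD A q" by (rule mult_le_mono2)
  then have "RD A q \<le> DIM('a) * HTvD A q" using RDle by linarith
  then have "RD A q \<le> HTvD A q * DIM('a)" by (simp only: mult.commute)
  then have "real (RD A q) \<le> real (HTvD A q * DIM('a))" by (rule of_nat_mono)
  then have le: "real (RD A q) \<le> real (HTvD A q) * real DIM('a)" by (simp only: of_nat_mult)
  have pos: "real DIM('a) > 0" by simp
  show ?thesis using le by (simp only: pos_divide_le_eq[OF pos])
next
  case False
  then obtain v where v: "v \<noteq> 0" "\<forall>H\<in>A. \<not> inner (wv q H) v \<le> 0" by blast
  have "RD A q \<le> card {H\<in>A. inner (wv q H) v \<le> 0}"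
    unfolding RD_eq[OF assms(2)] by (rule cINF_lower) (use v(1) in auto)
  also have "\<dots> = 0"
  proof -
    have "{H\<in>A. inner (wv q H) v \<le> 0} = {}" using v(2) by blast
    then show ?thesis by (simp only: card.empty)
  qed
  finally show ?thesis by simp
qed

end
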